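(* Let $\mathbb A=(A_n)_{n\in\mathbb Z^+}$ be a sequence of invertible linear operators on $\mathbb R^d$ and $\mathcal S=\{\|\cdot\|_n;\ n\in\mathbb Z^+\}$ a sequence of norms such that there exist $K,a>0$ with $\|\mathcal A(m,n)x\|_m\le Ke^{a(m-n)}\|x\|_n$ and $\|\mathcal A(n,m)x\|_n\le Ke^{a(m-n)}\|x\|_m$ for all $m\ge n$, $x$. Let $\Sigma=\Sigma_{ED,\mathbb A,\mathcal S}$ and let $r_1<r_2$ be in $(0,\infty)\setminus\Sigma$. Then the following are equivalent: (a) $S_{r_1}(n)=S_{r_2}(n)$ for some $n\in\mathbb Z^+$ (equivalently, for all $n\in\mathbb Z^+$); (b) $[r_1,r_2]\cap\Sigma=\emptyset$.
   Context: $\mathbb Z^+=\{0,1,\dots\}$. $\mathcal A(m,n)=A_{m-1}\cdots A_n$ ($m>n$), $\mathrm{Id}$ ($m=n$), $A_m^{-1}\cdots A_{n-1}^{-1}$ ($m<n$). For $r>0$, $n\in\mathbb Z^+$: $S_r(n)=\{v\in\mathbb R^d:\ \sup_{m\ge n}r^{-(m-n)}\|\mathcal A(m,n)v\|_m<+\infty\}$. A sequence $(C_n)_{n\in\mathbb Z^+}$ with cocycle $\mathcal C$ admits a strong exponential dichotomy w.r.t. $\mathcal S$ if there exist $K>0$, $a\ge\lambda>0$ and projections $P_n$ with $C_nP_n=P_{n+1}C_n$ such that for $m\ge n$, $x$, $Q_m=\mathrm{Id}-P_m$: $\|\mathcal C(m,n)P_nx\|_m\le Ke^{-\lambda(m-n)}\|x\|_n$,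 $\|\mathcal C(n,m)Q_mx\|_n\le Ke^{-\lambda(m-n)}\|x\|_m$, $\|\mathcal C(m,n)x\|_m\le Ke^{a(m-n)}\|x\|_n$, $\|\mathcal C(n,m)x\|_n\le Ke^{a(m-n)}\|x\|_m$. $\Sigma_{ED,\mathbb A,\mathcal S}$: set of $\tau>0$ such that $(\tau^{-1}A_n)_{n\in\mathbb Z^+}$ does not admit a strong exponential dichotomy w.r.t. $\mathcal S$. *)

theory Defs
  imports "HOL-Analysis.Analysis"
begin

definition is_norm :: "(real^'d \<Rightarrow> real) \<Rightarrow> bool" where
  "is_norm N \<longleftrightarrow> (\<forall>x. N x \<ge> 0) \<and> (\<forall>x. N x = 0 \<longleftrightarrow> x = 0)
     \<and> (\<forall>c x. N (c *\<^sub>R x) = \<bar>c\<bar> * N x) \<and> (\<forall>x y. N (x + y) \<le> N x + N y)"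

text \<open>Cocycle: A(m,n) = A_{m-1}...A_n (m>n), Id (m=n), A_m^{-1}...A_{n-1}^{-1} (m<n).\<close>
fun prod_fwd :: "(nat \<Rightarrow> real^'d^'d) \<Rightarrow> nat \<Rightarrow> nat \<Rightarrow> real^'d^'d" where
  "prod_fwd A n 0 = mat 1"
| "prod_fwd A n (Suc k) = A (n + k) ** prod_fwd A n k"

fun prod_bwd :: "(nat \<Rightarrow> real^'d^'d) \<Rightarrow> nat \<Rightarrow> nat \<Rightarrow> real^'d^'d" where
  "prod_bwd A m 0 = mat 1"
| "prod_bwd A m (Suc k) = prod_bwd A m k ** matrix_inv (A (m + k))"

definition cocycle :: "(nat \<Rightarrow> real^'d^'d) \<Rightarrow> nat \<Rightarrow> nat \<Rightarrow> real^'d^'d" where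
  "cocycle A m n = (if n \<le> m then prod_fwd A n (m - n) else prod_bwd A m (n - m))"

definition S_set :: "(nat \<Rightarrow> real^'d^'d) \<Rightarrow> (nat \<Rightarrow> real^'d \<Rightarrow> real) \<Rightarrow> real \<Rightarrow> nat \<Rightarrow> (real^'d) set" where
  "S_set A N r n = {v. \<exists>B. \<forall>m\<ge>n. r powi (- int (m - n)) * N m (cocycle A m n *v v) \<le> B}"

definition strong_exp_dichotomy :: "(nat \<Rightarrow> real^'d^'d) \<Rightarrow> (nat \<Rightarrow> real^'d \<Rightarrow> real) \<Rightarrow> bool" where
  "strong_exp_dichotomy C N \<longleftrightarrow>
    (\<exists>K a lam (P :: nat \<Rightarrow> real^'d^'d). K > 0 \<and> lam > 0 \<and> a \<ge> lam \<and>
      (\<forall>n. P n ** P n = P n) \<and> (\<forall>n. C n ** P n = P (Suc n) ** C n) \<and>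
      (\<forall>m n x. n \<le> m \<longrightarrow>
         N m (cocycle C m n *v (P n *v x)) \<le> K * exp (- lam * real (m - n)) * N n x \<and>
         N n (cocycle C n m *v ((mat 1 - P m) *v x)) \<le> K * exp (- lam * real (m - n)) * N m x \<and>
         N m (cocycle C m n *v x) \<le> K * exp (a * real (m - n)) * N n x \<and>
         N n (cocycle C n m *v x) \<le> K * exp (a * real (m - n)) * N m x))"

definition Sigma_ED :: "(nat \<Rightarrow> real^'d^'d) \<Rightarrow> (nat \<Rightarrow> real^'d \<Rightarrow> real) \<Rightarrow> real set" where
  "Sigma_ED A N = {\<tau>. \<tau> > 0 \<and> \<not> strong_exp_dichotomy (\<lambda>n. inverse \<tau> *\<^sub>R A n) N}"

end

theory Submission
  imports Defs
begin


lemma minv: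
  fixes M :: "real^'d^'d"
  assumes "invertible M"
  shows "M ** matrix_inv M = mat 1" "matrix_inv M ** M = mat 1"
proof -
  have "\<exists>A'. M ** A' = mat 1 \<and> A' ** M = mat 1" using assms unfolding invertible_def by blast
  hence "M ** matrix_inv M = mat 1 \<and> matrix_inv M ** M = mat 1"
    unfolding matrix_inv_def by (rule someI_ex)
  thus "M ** matrix_inv M = mat 1" "matrix_inv M ** M = mat 1" by auto
qed

lemma minv_unique:
  fixes M B :: "real^'d^'d"
  assumes "invertible M" "B ** M = mat 1"
  shows "matrix_inv M = B"
proof -
  have "matrix_inv M = (B ** M) ** matrix_inv M" using assms by simp
  also have "\<dots> = B" using minv[OF assms(1)] by (simp add: matrix_mul_assoc[symmetric])
  finally show ?thesis .
qed

lemma fwd_add: "prod_fwd A n (i + j) = prod_fwd A (n+i) j ** prod_fwd A n i"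
  by (induction j) (auto simp: matrix_mul_assoc add.assoc)

lemma bwd_fwd:
  fixes A :: "nat \<Rightarrow> real^'d^'d"
  assumes inv: "\<And>n. invertible (A n)"
  shows "prod_bwd A n k ** prod_fwd A n k = mat 1"
proof (induction k)
  case 0 then show ?case by simp
next
  case (Suc k)
  have "prod_bwd A n (Suc k) ** prod_fwd A n (Suc k)
      = prod_bwd A n k ** (matrix_inv (A (n+k)) ** A (n + k)) ** prod_fwd A n k"
    by (simp add: matrix_mul_assoc)
  also have "\<dots> = mat 1" using minv[OF inv] Suc by simp
  finally show ?case .
qed

lemma fwd_bwd:
  fixes A :: "nat \<Rightarrow> real^'d^'d"
  assumes inv: "\<And>n. invertible (A n)"
  shows "prod_fwd A n k ** prod_bwd A n k = mat 1"
  using matrix_left_right_inverse1[OF bwd_fwd[OF inv]] .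

lemma coc_fwd: "n \<le> m \<Longrightarrow> cocycle A m n = prod_fwd A n (m - n)"
  by (simp add: cocycle_def)

lemma coc_bwd: "n \<le> m \<Longrightarrow> cocycle A n m = prod_bwd A n (m - n)"
  by (cases "m = n") (auto simp: cocycle_def)

lemma coc_same[simp]: "cocycle A n n = mat 1"
  by (simp add: cocycle_def)

lemma coc_inv:
  fixes A :: "nat \<Rightarrow> real^'d^'d"
  assumes inv: "\<And>n. invertible (A n)" and "n \<le> m"
  shows "cocycle A n m ** cocycle A m n = mat 1" "cocycle A m n ** cocycle A n m = mat 1"
  using assms bwd_fwd[OF inv] fwd_bwd[OF inv] by (simp_all add: coc_fwd coc_bwd)

lemma coc_comp_fwd:
  assumes "n \<le> m" "m \<le> k"
  shows "cocycle A k n = cocycle A k m ** cocycle A m n"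
proof -
  have "k - n = (m - n) + (k - m)" using assms by simp
  hence "prod_fwd A n (k - n) = prod_fwd A (n + (m-n)) (k - m) ** prod_fwd A n (m - n)"
    by (simp add: fwd_add)
  thus ?thesis using assms by (simp add: coc_fwd)
qed

lemma coc_comp:
  fixes A :: "nat \<Rightarrow> real^'d^'d"
  assumes inv: "\<And>n. invertible (A n)" and "m \<le> k" "n0 \<le> k"
  shows "cocycle A k m = cocycle A k n0 ** cocycle A n0 m"
proof (cases "m \<le> n0")
  case True then show ?thesis using assms coc_comp_fwd by blast
next
  case False
  hence "cocycle A k n0 = cocycle A k m ** cocycle A m n0" using assms coc_comp_fwd[of n0 m k A] by simp
  hence "cocycle A k n0 ** cocycle A n0 m = cocycle A k m ** (cocycle A m n0 ** cocycle A n0 m)"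
    by (simp add: matrix_mul_assoc)
  also have "\<dots> = cocycle A k m" using coc_inv[OF inv, of n0 m] False by simp
  finally show ?thesis by simp
qed

lemma fwd_scale:
  fixes A :: "nat \<Rightarrow> real^'d^'d"
  shows "prod_fwd (\<lambda>n. c *\<^sub>R A n) n k = (c ^ k) *\<^sub>R prod_fwd A n k"
  by (induction k) (auto simp: matrix_scalar_ac scalar_matrix_assoc[symmetric])

lemma bwd_scale:
  fixes A :: "nat \<Rightarrow> real^'d^'d"
  assumes inv: "\<And>n. invertible (A n)" and c: "c \<noteq> 0"
  shows "prod_bwd (\<lambda>n. c *\<^sub>R A n) m k = (inverse c ^ k) *\<^sub>R prod_bwd A m k"
proof (induction k)
  case 0 then show ?case by simp
next
  case (Suc k)
  have "matrix_inv (c *\<^sub>R A (m + k)) = inverse c *\<^sub>R matrix_inv (A (m+k))"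
  proof (rule minv_unique)
    show "invertible (c *\<^sub>R A (m + k))" using scalar_invertible[OF c inv] .
    show "(inverse c *\<^sub>R matrix_inv (A (m + k))) ** (c *\<^sub>R A (m + k)) = mat 1"
      using c minv[OF inv] by (simp add: matrix_scalar_ac scalar_matrix_assoc[symmetric])
  qed
  then show ?case using Suc
    by (simp add: matrix_scalar_ac scalar_matrix_assoc[symmetric] mult.commute)
qed

lemma coc_scale_fwd:
  fixes A :: "nat \<Rightarrow> real^'d^'d"
  assumes "n \<le> m"
  shows "cocycle (\<lambda>n. c *\<^sub>R A n) m n = (c ^ (m-n)) *\<^sub>R cocycle A m n"
  using assms by (simp add: coc_fwd fwd_scale)

lemma coc_scale_bwd:
  fixes A :: "nat \<Rightarrow> real^'d^'d"
  assumes inv: "\<And>n. invertible (A n)" and c: "c \<noteq> 0" and "n \<le> m"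
  shows "cocycle (\<lambda>n. c *\<^sub>R A n) n m = (inverse c ^ (m-n)) *\<^sub>R cocycle A n m"
  using assms by (simp add: coc_bwd bwd_scale)

lemma coc_proj:
  fixes A P :: "nat \<Rightarrow> real^'d^'d"
  assumes "\<And>n. A n ** P n = P (Suc n) ** A n" "n \<le> m"
  shows "cocycle A m n ** P n = P m ** cocycle A m n"
proof -
  have "prod_fwd A n k ** P n = P (n + k) ** prod_fwd A n k" for k
  proof (induction k)
    case 0 then show ?case by simp
  next
    case (Suc k)
    have "prod_fwd A n (Suc k) ** P n = A (n+k) ** (prod_fwd A n k ** P n)" by (simp add: matrix_mul_assoc)
    also have "\<dots> = (A (n+k) ** P (n+k)) ** prod_fwd A n k" using Suc by (simp add: matrix_mul_assoc)
    also have "\<dots> = P (n + Suc k) ** prod_fwd A n (Suc k)" using assms(1)[of "n+k"] by (simp add: matrix_mul_assoc)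
    finally show ?case .
  qed
  from this[of "m-n"] show ?thesis using assms(2) by (simp add: coc_fwd)
qed




lemma norm_scale:
  assumes "is_norm M" shows "M (c *\<^sub>R x) = \<bar>c\<bar> * M x"
  using assms unfolding is_norm_def by blast

lemma norm_nonneg':
  assumes "is_norm M" shows "M x \<ge> 0"
  using assms unfolding is_norm_def by blast

lemma norm_zero':
  assumes "is_norm M" shows "M x = 0 \<longleftrightarrow> x = 0"
  using assms unfolding is_norm_def by blast

lemma S_alt: "S_set A N r n = {v. \<exists>B. \<forall>m\<ge>n. N m (cocycle A m n *v v) / r ^ (m - n) \<le> B}"
proof -
  have h: "r powi (- int (m - n)) * y = y / r ^ (m - n)" for m y
    by (simp only: power_int_minus power_int_of_nat) (simp add: divide_inverse mult.commute)
  show ?thesis unfolding S_set_def h ..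
qed

definition dichA :: "(nat \<Rightarrow> real^'d^'d) \<Rightarrow> (nat \<Rightarrow> real^'d \<Rightarrow> real) \<Rightarrow> real \<Rightarrow> real \<Rightarrow> real \<Rightarrow> real
   \<Rightarrow> (nat \<Rightarrow> real^'d^'d) \<Rightarrow> bool" where
  "dichA A N \<tau> K a lam P \<longleftrightarrow> K > 0 \<and> lam > 0 \<and> a \<ge> lam \<and>
      (\<forall>n. P n ** P n = P n) \<and> (\<forall>n. A n ** P n = P (Suc n) ** A n) \<and>
      (\<forall>m n x. n \<le> m \<longrightarrow>
         N m (cocycle A m n *v (P n *v x)) \<le> (K * exp (- lam * real (m - n)) * N n x) * \<tau> ^ (m - n) \<and>
         N n (cocycle A n m *v ((mat 1 - P m) *v x)) \<le> (K * exp (- lam * real (m - n)) * N m x) / \<tau> ^ (m - n) \<and>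
         N m (cocycle A m n *v x) \<le> (K * exp (a * real (m - n)) * N n x) * \<tau> ^ (m - n) \<and>
         N n (cocycle A n m *v x) \<le> (K * exp (a * real (m - n)) * N m x) / \<tau> ^ (m - n))"

lemma dich_iff:
  fixes A :: "nat \<Rightarrow> real^'d^'d"
  assumes inv: "\<And>n. invertible (A n)" and norms: "\<And>n. is_norm (N n)" and tp: "\<tau> > 0"
  shows "strong_exp_dichotomy (\<lambda>n. inverse \<tau> *\<^sub>R A n) N \<longleftrightarrow> (\<exists>K a lam P. dichA A N \<tau> K a lam P)"
proof -
  let ?C = "\<lambda>n. inverse \<tau> *\<^sub>R A n"
  have inv_eq: "(?C n ** P n = P (Suc n) ** ?C n) \<longleftrightarrow> (A n ** P n = P (Suc n) ** A n)"
    for P :: "nat \<Rightarrow> real^'d^'d" and n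
    using tp by (simp add: matrix_scalar_ac scalar_matrix_assoc[symmetric])
  have e1: "(N m (cocycle ?C m n *v y) \<le> R) \<longleftrightarrow> (N m (cocycle A m n *v y) \<le> R * \<tau> ^ (m - n))"
    if "n \<le> m" for m n y R
  proof -
    have "N m (cocycle ?C m n *v y) = N m (cocycle A m n *v y) / \<tau> ^ (m - n)"
      using that tp by (simp add: coc_scale_fwd scaleR_matrix_vector_assoc[symmetric] norm_scale[OF norms]
          power_inverse divide_inverse mult.commute)
    thus ?thesis using tp by (simp add: divide_le_eq)
  qed
  have e2: "(N n (cocycle ?C n m *v y) \<le> R) \<longleftrightarrow> (N n (cocycle A n m *v y) \<le> R / \<tau> ^ (m - n))"
    if "n \<le> m" for m n y R
  proof -
    have "N n (cocycle ?C n m *v y) = N n (cocycle A n m *v y) * \<tau> ^ (m - n)"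
      using that tp by (simp add: coc_scale_bwd[OF inv] scaleR_matrix_vector_assoc[symmetric] norm_scale[OF norms]
          mult.commute)
    thus ?thesis using tp by (simp add: le_divide_eq)
  qed
  show ?thesis
    unfolding strong_exp_dichotomy_def dichA_def
    by (simp add: inv_eq e1 e2 cong: imp_cong conj_cong)
qed

lemma char_S:
  fixes A P :: "nat \<Rightarrow> real^'d^'d"
  assumes inv: "\<And>n. invertible (A n)" and norms: "\<And>n. is_norm (N n)"
    and sp: "\<sigma> > 0" and Kp: "K > 0" and ap: "0 < \<alpha>" and al: "\<alpha> \<le> \<sigma>" and sb: "\<sigma> < \<beta>"
    and proj: "\<forall>n. P n ** P n = P n" and invar: "\<forall>n. A n ** P n = P (Suc n) ** A n"
    and st: "\<forall>m n x. n \<le> m \<longrightarrow> N m (cocycle A m n *v (P n *v x)) \<le> K * \<alpha> ^ (m - n) * N n x"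
    and un: "\<forall>m n x. n \<le> m \<longrightarrow> N n (cocycle A n m *v ((mat 1 - P m) *v x)) \<le> K / \<beta> ^ (m - n) * N m x"
  shows "S_set A N \<sigma> n = {v. P n *v v = v}"
proof
  show "{v. P n *v v = v} \<subseteq> S_set A N \<sigma> n"
  proof
    fix v assume "v \<in> {v. P n *v v = v}"
    hence pv: "P n *v v = v" by simp
    have "N m (cocycle A m n *v v) / \<sigma> ^ (m - n) \<le> K * N n v" if "m \<ge> n" for m
    proof -
      have "N m (cocycle A m n *v v) \<le> K * \<alpha> ^ (m - n) * N n v"
        using st that pv by metis
      also have "\<dots> \<le> K * \<sigma> ^ (m - n) * N n v"
        using Kp ap al norm_nonneg'[OF norms] by (intro mult_right_mono mult_left_mono power_mono) auto
      finally show ?thesis using sp by (simp add: divide_le_eq mult_ac)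
    qed
    thus "v \<in> S_set A N \<sigma> n" unfolding S_alt by blast
  qed
next
  show "S_set A N \<sigma> n \<subseteq> {v. P n *v v = v}"
  proof
    fix v assume "v \<in> S_set A N \<sigma> n"
    then obtain B where B: "\<And>m. m \<ge> n \<Longrightarrow> N m (cocycle A m n *v v) / \<sigma> ^ (m - n) \<le> B"
      unfolding S_alt by blast
    define w where "w = (mat 1 - P n) *v v"
    have bnd: "N n w \<le> K * B * (\<sigma> / \<beta>) ^ k" for k
    proof -
      let ?m = "n + k"
      have cp: "cocycle A ?m n ** P n = P ?m ** cocycle A ?m n"
        using coc_proj[of A P n ?m] invar by simp
      have pq: "cocycle A ?m n *v (P n *v v) = P ?m *v (cocycle A ?m n *v v)"
        by (simp add: matrix_vector_mul_assoc cp)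
      have cq: "cocycle A ?m n *v w = (mat 1 - P ?m) *v (cocycle A ?m n *v v)"
        unfolding w_def matrix_vector_mult_diff_rdistrib matrix_vector_mult_diff_distrib pq by simp
      have "w = (cocycle A n ?m ** cocycle A ?m n) *v w"
        using coc_inv[OF inv, of n ?m] by simp
      also have "\<dots> = cocycle A n ?m *v ((mat 1 - P ?m) *v (cocycle A ?m n *v v))"
        by (simp add: matrix_vector_mul_assoc[symmetric] cq)
      finally have "N n w \<le> K / \<beta> ^ k * N ?m (cocycle A ?m n *v v)"
        using un by (metis add_diff_cancel_left' le_add1)
      also have "\<dots> \<le> K / \<beta> ^ k * (B * \<sigma> ^ k)"
      proof -
        have "N ?m (cocycle A ?m n *v v) / \<sigma> ^ k \<le> B" using B[of ?m] by simp
        hence "N ?m (cocycle A ?m n *v v) \<le> B * \<sigma> ^ k" using sp by (simp add: divide_le_eq)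
        thus ?thesis using Kp sp sb by (intro mult_left_mono) auto
      qed
      also have "\<dots> = K * B * (\<sigma> / \<beta>) ^ k" by (simp add: power_divide)
      finally show ?thesis .
    qed
    have "(\<lambda>k. K * B * (\<sigma> / \<beta>) ^ k) \<longlonglongrightarrow> K * B * 0"
      using sp sb by (intro tendsto_intros) auto
    hence "N n w \<le> K * B * 0" using bnd by (intro LIMSEQ_le_const) auto
    hence "N n w \<le> 0" by simp
    hence "w = 0" using norm_nonneg'[OF norms, of n w] norm_zero'[OF norms] by (simp add: antisym)
    thus "v \<in> {v. P n *v v = v}" unfolding w_def by (simp add: matrix_vector_mult_diff_rdistrib)
  qed
qed




lemma Sev:
  assumes rp: "r > 0"
  shows "v \<in> S_set A N r n \<longleftrightarrow> (\<exists>B M. \<forall>k\<ge>M. N k (cocycle A k n *v v) / r ^ k \<le> B)"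
proof
  assume "v \<in> S_set A N r n"
  then obtain B where B: "\<And>m. m \<ge> n \<Longrightarrow> N m (cocycle A m n *v v) / r ^ (m - n) \<le> B"
    unfolding S_alt by blast
  have "N k (cocycle A k n *v v) / r ^ k \<le> B / r ^ n" if "k \<ge> n" for k
  proof -
    have rk: "r ^ k = r ^ (k - n) * r ^ n" using that by (simp add: power_add[symmetric])
    have "N k (cocycle A k n *v v) / r ^ k = (N k (cocycle A k n *v v) / r ^ (k - n)) / r ^ n"
      by (simp add: rk)
    also have "\<dots> \<le> B / r ^ n" using B[OF that] rp by (intro divide_right_mono) auto
    finally show ?thesis .
  qed
  thus "\<exists>B M. \<forall>k\<ge>M. N k (cocycle A k n *v v) / r ^ k \<le> B" by blast
next
  assume "\<exists>B M. \<forall>k\<ge>M. N k (cocycle A k n *v v) / r ^ k \<le> B"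
  then obtain B M where B: "\<And>k. k \<ge> M \<Longrightarrow> N k (cocycle A k n *v v) / r ^ k \<le> B" by blast
  define t where "t m = N m (cocycle A m n *v v) / r ^ (m - n)" for m
  define B' where "B' = \<bar>r ^ n * B\<bar> + (\<Sum>j<M. \<bar>t j\<bar>)"
  have "t m \<le> B'" if "m \<ge> n" for m
  proof (cases "m \<ge> M")
    case True
    have rk: "r ^ m = r ^ (m - n) * r ^ n" using that by (simp add: power_add[symmetric])
    have "t m = r ^ n * (N m (cocycle A m n *v v) / r ^ m)" unfolding t_def using rp by (simp add: rk)
    also have "\<dots> \<le> r ^ n * B" using B[OF True] rp by (intro mult_left_mono) auto
    also have "\<dots> \<le> B'"
    proof -
      have "0 \<le> (\<Sum>j<M. \<bar>t j\<bar>)" by (intro sum_nonneg) simp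
      thus ?thesis unfolding B'_def using abs_ge_self[of "r ^ n * B"] by linarith
    qed
    finally show ?thesis .
  next
    case False
    have "t m \<le> \<bar>t m\<bar>" by simp
    also have "\<dots> \<le> (\<Sum>j<M. \<bar>t j\<bar>)" using False by (intro member_le_sum) auto
    also have "\<dots> \<le> B'" unfolding B'_def by simp
    finally show ?thesis .
  qed
  thus "v \<in> S_set A N r n" unfolding S_alt t_def by blast
qed

lemma Sinv:
  fixes A :: "nat \<Rightarrow> real^'d^'d"
  assumes inv: "\<And>n. invertible (A n)" and rp: "r > 0"
  shows "x \<in> S_set A N r m \<longleftrightarrow> cocycle A n0 m *v x \<in> S_set A N r n0"
proof -
  have eq: "cocycle A k m *v x = cocycle A k n0 *v (cocycle A n0 m *v x)" if "k \<ge> max m n0" for k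
    using coc_comp[OF inv, of m k n0] that by (simp add: matrix_vector_mul_assoc)
  have "(\<exists>B M. \<forall>k\<ge>M. N k (cocycle A k m *v x) / r ^ k \<le> B) \<longleftrightarrow>
        (\<exists>B M. \<forall>k\<ge>M. N k (cocycle A k n0 *v (cocycle A n0 m *v x)) / r ^ k \<le> B)"
  proof
    assume "\<exists>B M. \<forall>k\<ge>M. N k (cocycle A k m *v x) / r ^ k \<le> B"
    then obtain B M where B: "\<forall>k\<ge>M. N k (cocycle A k m *v x) / r ^ k \<le> B" by blast
    have "\<forall>k\<ge>max M (max m n0). N k (cocycle A k n0 *v (cocycle A n0 m *v x)) / r ^ k \<le> B"
      using B eq by (metis max.bounded_iff)
    thus "\<exists>B M. \<forall>k\<ge>M. N k (cocycle A k n0 *v (cocycle A n0 m *v x)) / r ^ k \<le> B" by blast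
  next
    assume "\<exists>B M. \<forall>k\<ge>M. N k (cocycle A k n0 *v (cocycle A n0 m *v x)) / r ^ k \<le> B"
    then obtain B M where B: "\<forall>k\<ge>M. N k (cocycle A k n0 *v (cocycle A n0 m *v x)) / r ^ k \<le> B" by blast
    have "\<forall>k\<ge>max M (max m n0). N k (cocycle A k m *v x) / r ^ k \<le> B"
      using B eq by (metis max.bounded_iff)
    thus "\<exists>B M. \<forall>k\<ge>M. N k (cocycle A k m *v x) / r ^ k \<le> B" by blast
  qed
  thus ?thesis using Sev[OF rp] by blast
qed

lemma dich_char:
  fixes A :: "nat \<Rightarrow> real^'d^'d"
  assumes inv: "\<And>n. invertible (A n)" and norms: "\<And>n. is_norm (N n)"
    and tp: "\<tau> > 0" and d: "dichA A N \<tau> K a lam P"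
  shows "\<tau> * exp (- lam) < \<tau>" "\<tau> < \<tau> * exp lam"
    "\<And>\<sigma> n. \<tau> * exp (- lam) \<le> \<sigma> \<Longrightarrow> \<sigma> < \<tau> * exp lam \<Longrightarrow> S_set A N \<sigma> n = {v. P n *v v = v}"
proof -
  from d have Kp: "K > 0" and lp: "lam > 0" and proj: "\<forall>n. P n ** P n = P n"
    and invar: "\<forall>n. A n ** P n = P (Suc n) ** A n"
    and est: "\<forall>m n x. n \<le> m \<longrightarrow>
         N m (cocycle A m n *v (P n *v x)) \<le> (K * exp (- lam * real (m - n)) * N n x) * \<tau> ^ (m - n) \<and>
         N n (cocycle A n m *v ((mat 1 - P m) *v x)) \<le> (K * exp (- lam * real (m - n)) * N m x) / \<tau> ^ (m - n)"
    unfolding dichA_def by auto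
  show a1: "\<tau> * exp (- lam) < \<tau>" using tp lp by simp
  show a2: "\<tau> < \<tau> * exp lam" using tp lp by simp
  have h1: "exp (- lam * real k) = exp (- lam) ^ k" for k
    by (metis exp_of_nat_mult mult.commute)
  have st: "\<forall>m n x. n \<le> m \<longrightarrow> N m (cocycle A m n *v (P n *v x)) \<le> K * (\<tau> * exp (- lam)) ^ (m - n) * N n x"
  proof (intro allI impI)
    fix m n :: nat and x assume "n \<le> m"
    hence "N m (cocycle A m n *v (P n *v x)) \<le> (K * exp (- lam * real (m - n)) * N n x) * \<tau> ^ (m - n)"
      using est by blast
    also have "\<dots> = K * (\<tau> * exp (- lam)) ^ (m - n) * N n x"
      unfolding h1 by (simp add: power_mult_distrib)
    finally show "N m (cocycle A m n *v (P n *v x)) \<le> K * (\<tau> * exp (- lam)) ^ (m - n) * N n x" .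
  qed
  have un: "\<forall>m n x. n \<le> m \<longrightarrow> N n (cocycle A n m *v ((mat 1 - P m) *v x)) \<le> K / (\<tau> * exp lam) ^ (m - n) * N m x"
  proof (intro allI impI)
    fix m n :: nat and x assume "n \<le> m"
    hence "N n (cocycle A n m *v ((mat 1 - P m) *v x)) \<le> (K * exp (- lam * real (m - n)) * N m x) / \<tau> ^ (m - n)"
      using est by blast
    also have "\<dots> = K / (\<tau> * exp lam) ^ (m - n) * N m x"
      unfolding h1 by (simp add: power_mult_distrib exp_minus power_inverse divide_inverse)
    finally show "N n (cocycle A n m *v ((mat 1 - P m) *v x)) \<le> K / (\<tau> * exp lam) ^ (m - n) * N m x" .
  qed
  fix \<sigma> n assume s1: "\<tau> * exp (- lam) \<le> \<sigma>" and s2: "\<sigma> < \<tau> * exp lam"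
  have sp: "\<sigma> > 0" using s1 tp by (smt (verit) exp_gt_zero mult_pos_pos)
  show "S_set A N \<sigma> n = {v. P n *v v = v}"
    by (rule char_S[OF inv norms sp Kp _ s1 s2 proj invar st un]) (use tp in simp)
qed

lemma loc_const:
  fixes A :: "nat \<Rightarrow> real^'d^'d"
  assumes inv: "\<And>n. invertible (A n)" and norms: "\<And>n. is_norm (N n)"
    and tp: "\<tau> > 0" and ns: "\<tau> \<notin> Sigma_ED A N"
  shows "\<exists>e>0. \<forall>t n. \<bar>t - \<tau>\<bar> < e \<longrightarrow> S_set A N t n = S_set A N \<tau> n"
proof -
  have "strong_exp_dichotomy (\<lambda>n. inverse \<tau> *\<^sub>R A n) N" using ns tp unfolding Sigma_ED_def by auto
  then obtain K a lam P where d: "dichA A N \<tau> K a lam P" using dich_iff[of A N \<tau>, OF inv norms tp] by blast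
  note c = dich_char[OF inv norms tp d]
  define e where "e = min (\<tau> - \<tau> * exp (- lam)) (\<tau> * exp lam - \<tau>)"
  have "e > 0" unfolding e_def using c(1,2) by simp
  moreover have "S_set A N t n = S_set A N \<tau> n" if "\<bar>t - \<tau>\<bar> < e" for t n
  proof -
    have "\<tau> * exp (- lam) \<le> t" "t < \<tau> * exp lam" using that unfolding e_def by auto
    hence "S_set A N t n = {v. P n *v v = v}" by (rule c(3))
    moreover have "S_set A N \<tau> n = {v. P n *v v = v}" using c(1,2) by (intro c(3)) auto
    ultimately show ?thesis by simp
  qed
  ultimately show ?thesis by blast
qed

lemma mono4:
  fixes a b c d a' b' c' d' :: real
  assumes "0 \<le> a" "a \<le> a'" "0 \<le> b" "b \<le> b'" "0 \<le> c" "c \<le> c'" "0 \<le> d" "d \<le> d'"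
  shows "a * b * c * d \<le> a' * b' * c' * d'"
  using assms by (intro mult_mono) (auto intro: mult_nonneg_nonneg order_trans)




theorem lemma7p5:
  fixes A :: "nat \<Rightarrow> real^'d^'d" and N :: "nat \<Rightarrow> real^'d \<Rightarrow> real"
    and r1 r2 :: real
  assumes inv: "\<And>n. invertible (A n)"
    and norms: "\<And>n. is_norm (N n)"
    and growth: "\<exists>K a. K > 0 \<and> a > 0 \<and> (\<forall>m n x. n \<le> m \<longrightarrow>
         N m (cocycle A m n *v x) \<le> K * exp (a * real (m - n)) * N n x \<and>
         N n (cocycle A n m *v x) \<le> K * exp (a * real (m - n)) * N m x)"
    and r1pos: "0 < r1" and r12: "r1 < r2"
    and r1ns: "r1 \<notin> Sigma_ED A N" and r2ns: "r2 \<notin> Sigma_ED A N"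
  shows "((\<exists>n. S_set A N r1 n = S_set A N r2 n) \<longleftrightarrow> {r1..r2} \<inter> Sigma_ED A N = {})
       \<and> ((\<forall>n. S_set A N r1 n = S_set A N r2 n) \<longleftrightarrow> {r1..r2} \<inter> Sigma_ED A N = {})"
proof -
  have r2pos: "0 < r2" using r1pos r12 by simp
  have "strong_exp_dichotomy (\<lambda>n. inverse r1 *\<^sub>R A n) N" using r1ns r1pos unfolding Sigma_ED_def by auto
  then obtain K1 a1 l1 P1 where d1: "dichA A N r1 K1 a1 l1 P1"
    using dich_iff[of A N r1, OF inv norms r1pos] by blast
  have "strong_exp_dichotomy (\<lambda>n. inverse r2 *\<^sub>R A n) N" using r2ns r2pos unfolding Sigma_ED_def by auto
  then obtain K2 a2 l2 P2 where d2: "dichA A N r2 K2 a2 l2 P2"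
    using dich_iff[of A N r2, OF inv norms r2pos] by blast
  note c1 = dich_char[OF inv norms r1pos d1] and c2 = dich_char[OF inv norms r2pos d2]
  have S1: "S_set A N r1 n = {v. P1 n *v v = v}" for n using c1(1,2) by (intro c1(3)) auto
  have S2: "S_set A N r2 n = {v. P2 n *v v = v}" for n using c2(1,2) by (intro c2(3)) auto

  have DA: "\<forall>n. S_set A N r1 n = S_set A N r2 n" if D: "{r1..r2} \<inter> Sigma_ED A N = {}"
  proof
    fix n
    let ?f = "\<lambda>t. S_set A N t n"
    show "?f r1 = ?f r2"
    proof (rule connected_local_const[of "{r1..r2}"])
      show "connected {r1..r2}" by simp
      show "r1 \<in> {r1..r2}" "r2 \<in> {r1..r2}" using r12 by auto
      show "\<forall>a\<in>{r1..r2}. eventually (\<lambda>b. ?f a = ?f b) (at a within {r1..r2})"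
      proof
        fix a assume a: "a \<in> {r1..r2}"
        hence ap: "a > 0" using r1pos by simp
        have "a \<notin> Sigma_ED A N" using D a by blast
        then obtain e where e: "e > 0" "\<forall>t n. \<bar>t - a\<bar> < e \<longrightarrow> S_set A N t n = S_set A N a n"
          using loc_const[of A N a, OF inv norms ap] by blast
        show "eventually (\<lambda>b. ?f a = ?f b) (at a within {r1..r2})"
          unfolding eventually_at using e by (metis dist_real_def)
      qed
    qed
  qed

  have ED: "{r1..r2} \<inter> Sigma_ED A N = {}" if E: "\<exists>n. S_set A N r1 n = S_set A N r2 n"
  proof -
    from E obtain n0 where n0: "S_set A N r1 n0 = S_set A N r2 n0" by blast
    have Sall: "S_set A N r1 m = S_set A N r2 m" for m
    proof (intro set_eqI)
      fix x
      have "x \<in> S_set A N r1 m \<longleftrightarrow> cocycle A n0 m *v x \<in> S_set A N r1 n0" by (rule Sinv[OF inv r1pos])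
      also have "\<dots> \<longleftrightarrow> cocycle A n0 m *v x \<in> S_set A N r2 n0" using n0 by simp
      also have "\<dots> \<longleftrightarrow> x \<in> S_set A N r2 m" by (rule Sinv[OF inv r2pos, symmetric])
      finally show "x \<in> S_set A N r1 m \<longleftrightarrow> x \<in> S_set A N r2 m" .
    qed
    have P12: "P1 m *v (P2 m *v x) = P2 m *v x" for m x
    proof -
      have pp: "P2 m ** P2 m = P2 m" using d2 unfolding dichA_def by blast
      have "P2 m *v (P2 m *v x) = P2 m *v x" by (simp add: matrix_vector_mul_assoc pp)
      hence "P2 m *v x \<in> S_set A N r2 m" using S2 by blast
      hence "P2 m *v x \<in> S_set A N r1 m" using Sall by blast
      thus ?thesis using S1 by blast
    qed
    from d1 have K1: "K1 > 0" and l1: "l1 > 0" "a1 \<ge> l1"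
      and e1: "\<forall>m n x. n \<le> m \<longrightarrow>
         N m (cocycle A m n *v (P1 n *v x)) \<le> (K1 * exp (- l1 * real (m - n)) * N n x) * r1 ^ (m - n) \<and>
         N m (cocycle A m n *v x) \<le> (K1 * exp (a1 * real (m - n)) * N n x) * r1 ^ (m - n)"
      unfolding dichA_def by auto
    from d2 have K2: "K2 > 0" and l2: "l2 > 0" "a2 \<ge> l2"
      and proj2: "\<forall>n. P2 n ** P2 n = P2 n" and invar2: "\<forall>n. A n ** P2 n = P2 (Suc n) ** A n"
      and e2: "\<forall>m n x. n \<le> m \<longrightarrow>
         N m (cocycle A m n *v (P2 n *v x)) \<le> (K2 * exp (- l2 * real (m - n)) * N n x) * r2 ^ (m - n) \<and>
         N n (cocycle A n m *v ((mat 1 - P2 m) *v x)) \<le> (K2 * exp (- l2 * real (m - n)) * N m x) / r2 ^ (m - n) \<and>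
         N n (cocycle A n m *v x) \<le> (K2 * exp (a2 * real (m - n)) * N m x) / r2 ^ (m - n)"
      unfolding dichA_def by auto
    have P2b: "N n (P2 n *v x) \<le> K2 * N n x" for n x
      using e2 by (metis coc_same matrix_vector_mul_lid order_refl diff_self_eq_0 of_nat_0 mult_zero_right
          exp_zero mult_1_right power_0)
    define K where "K = K1 * K2 + K1 + K2"
    define l where "l = min l1 l2"
    define a where "a = max a1 a2"
    have Kp: "K > 0" and KK: "K1 * K2 \<le> K" "K1 \<le> K" "K2 \<le> K" unfolding K_def using K1 K2 mult_pos_pos[OF K1 K2] by linarith+
    have lp: "l > 0" unfolding l_def using l1 l2 by simp
    have al: "a \<ge> l" unfolding a_def l_def using l1 l2 by linarith
    have nn: "\<And>n x. 0 \<le> N n x" using norm_nonneg'[OF norms] by blast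
    show ?thesis
    proof (rule ccontr)
      assume "{r1..r2} \<inter> Sigma_ED A N \<noteq> {}"
      then obtain \<tau> where t: "\<tau> \<in> {r1..r2}" "\<tau> \<in> Sigma_ED A N" by blast
      have tp: "\<tau> > 0" using t r1pos by simp
      have "dichA A N \<tau> K a l P2"
        unfolding dichA_def
      proof (intro conjI Kp lp al proj2 invar2 allI impI)
        fix m n :: nat and x assume mn: "n \<le> m"
        let ?k = "m - n"
        have ex1: "exp (- l1 * real ?k) \<le> exp (- l * real ?k)" "exp (- l2 * real ?k) \<le> exp (- l * real ?k)"
          "exp (a1 * real ?k) \<le> exp (a * real ?k)" "exp (a2 * real ?k) \<le> exp (a * real ?k)"
          unfolding l_def a_def by (auto intro!: mult_right_mono)
        have pw1: "r1 ^ ?k \<le> \<tau> ^ ?k" using t r1pos by (intro power_mono) auto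
        have pw2: "1 / r2 ^ ?k \<le> 1 / \<tau> ^ ?k" using t tp by (intro divide_left_mono power_mono) auto
        have "N m (cocycle A m n *v (P2 n *v x)) = N m (cocycle A m n *v (P1 n *v (P2 n *v x)))"
          by (simp add: P12)
        also have "\<dots> \<le> K1 * exp (- l1 * real ?k) * N n (P2 n *v x) * r1 ^ ?k" using e1 mn by blast
        also have "\<dots> \<le> K1 * exp (- l1 * real ?k) * (K2 * N n x) * r1 ^ ?k"
          using P2b K1 pw1 r1pos by (intro mult_right_mono mult_left_mono) auto
        also have "\<dots> = (K1 * K2) * exp (- l1 * real ?k) * N n x * r1 ^ ?k" by (simp add: mult_ac)
        also have "\<dots> \<le> K * exp (- l * real ?k) * N n x * \<tau> ^ ?k"
          using KK ex1 pw1 K1 K2 nn r1pos by (intro mono4) auto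
        finally show "N m (cocycle A m n *v (P2 n *v x)) \<le> K * exp (- l * real ?k) * N n x * \<tau> ^ ?k" .
        have "N n (cocycle A n m *v ((mat 1 - P2 m) *v x)) \<le> K2 * exp (- l2 * real ?k) * N m x * (1 / r2 ^ ?k)"
          using e2 mn by simp
        also have "\<dots> \<le> K * exp (- l * real ?k) * N m x * (1 / \<tau> ^ ?k)"
          using KK ex1 pw2 K2 nn r2pos by (intro mono4) auto
        finally show "N n (cocycle A n m *v ((mat 1 - P2 m) *v x)) \<le> K * exp (- l * real ?k) * N m x / \<tau> ^ ?k"
          by simp
        have "N m (cocycle A m n *v x) \<le> K1 * exp (a1 * real ?k) * N n x * r1 ^ ?k" using e1 mn by blast
        also have "\<dots> \<le> K * exp (a * real ?k) * N n x * \<tau> ^ ?k"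
          using KK ex1 pw1 K1 nn r1pos by (intro mono4) auto
        finally show "N m (cocycle A m n *v x) \<le> K * exp (a * real ?k) * N n x * \<tau> ^ ?k" .
        have "N n (cocycle A n m *v x) \<le> K2 * exp (a2 * real ?k) * N m x * (1 / r2 ^ ?k)"
          using e2 mn by simp
        also have "\<dots> \<le> K * exp (a * real ?k) * N m x * (1 / \<tau> ^ ?k)"
          using KK ex1 pw2 K2 nn r2pos by (intro mono4) auto
        finally show "N n (cocycle A n m *v x) \<le> K * exp (a * real ?k) * N m x / \<tau> ^ ?k"
          by simp
      qed
      hence "strong_exp_dichotomy (\<lambda>n. inverse \<tau> *\<^sub>R A n) N"
        using dich_iff[of A N \<tau>, OF inv norms tp] by blast
      thus False using t(2) unfolding Sigma_ED_def by simp
    qed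
  qed
  show ?thesis using DA ED by blast
qed


end
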